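(* Let $m\ge 0$ be an integer, $\mathbf{X}\in\{0,1\}^{(m+1)\times m}$ and $\mathbf{Y}\in\{0,1\}^{m\times(m+1)}$. Then $\mathbb{D}_{1,0}(\mathbf{X})\cap\mathbb{D}_{0,1}(\mathbf{Y})\neq\emptyset$ if and only if $\mathbb{I}_{0,1}(\mathbf{X})\cap\mathbb{I}_{1,0}(\mathbf{Y})\neq\emptyset$.
   Context: For a binary array $\mathbf{X}$, $\mathbb{D}_{t_r,t_c}(\mathbf{X})$ denotes the set of all arrays obtained from $\mathbf{X}$ by deleting any $t_r$ rows and any $t_c$ columns, and $\mathbb{I}_{t_r,t_c}(\mathbf{X})$ the set of all binary arrays obtained from $\mathbf{X}$ by inserting $t_r$ rows and $t_c$ columns (arbitrary binary content, arbitrary positions). *)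

theory Defs
  imports Main
begin

text \<open>A binary array is a triple (r, c, A): r rows, c columns, entries A i j for i < r, j < c.
  Entries outside the range are normalized to False so that equality of triples is
  equality of arrays.\<close>

type_synonym barray = "nat \<times> nat \<times> (nat \<Rightarrow> nat \<Rightarrow> bool)"

definition wf_array :: "barray \<Rightarrow> bool" where
  "wf_array X = (case X of (r, c, A) \<Rightarrow> (\<forall>i j. (i \<ge> r \<or> j \<ge> c) \<longrightarrow> \<not> A i j))"

definition binarrays :: "nat \<Rightarrow> nat \<Rightarrow> barray set" where
  "binarrays r c = {X. wf_array X \<and> fst X = r \<and> fst (snd X) = c}"

definition delete_rc :: "barray \<Rightarrow> nat set \<Rightarrow> nat set \<Rightarrow> barray" where
  "delete_rc X R C = (case X of (r, c, A) \<Rightarrow>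
     (let rs = sorted_list_of_set ({..<r} - R); cs = sorted_list_of_set ({..<c} - C)
      in (length rs, length cs,
          \<lambda>i j. i < length rs \<and> j < length cs \<and> A (rs ! i) (cs ! j))))"

definition Del :: "nat \<Rightarrow> nat \<Rightarrow> barray \<Rightarrow> barray set" where
  "Del tr tc X = (case X of (r, c, A) \<Rightarrow>
     {delete_rc X R C | R C. R \<subseteq> {..<r} \<and> card R = tr \<and> C \<subseteq> {..<c} \<and> card C = tc})"

text \<open>I_{tr,tc}(X): all binary arrays obtained by inserting tr rows and tc columns
  (arbitrary content, arbitrary positions), i.e. arrays Y of size (r+tr) x (c+tc) with
  row positions R and column positions C (|R| = tr, |C| = tc) such that removing the
  inserted rows/columns gives back X.\<close>
definition Ins :: "nat \<Rightarrow> nat \<Rightarrow> barray \<Rightarrow> barray set" where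
  "Ins tr tc X = (case X of (r, c, A) \<Rightarrow>
     {Y \<in> binarrays (r + tr) (c + tc). \<exists>R C. R \<subseteq> {..<r + tr} \<and> card R = tr \<and>
        C \<subseteq> {..<c + tc} \<and> card C = tc \<and> delete_rc Y R C = X})"

end

theory Submission
  imports Defs
begin

definition skip :: "nat \<Rightarrow> nat \<Rightarrow> nat" where
  "skip i k = (if k < i then k else Suc k)"

definition unskip :: "nat \<Rightarrow> nat \<Rightarrow> nat" where
  "unskip i k = (if k < i then k else k - 1)"

lemma sl_del1:
  assumes "i < Suc r"
  shows "sorted_list_of_set ({..<Suc r} - {i}) = map (skip i) [0..<r]"
proof -
  have "sorted (map (skip i) [0..<r])"
    by (auto simp: sorted_iff_nth_mono skip_def)
  moreover have "distinct (map (skip i) [0..<r])"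
    by (auto simp: distinct_map inj_on_def skip_def split: if_splits)
  moreover have "set (map (skip i) [0..<r]) = {..<Suc r} - {i}"
  proof (rule set_eqI, rule iffI)
    fix x assume "x \<in> set (map (skip i) [0..<r])" then show "x \<in> {..<Suc r} - {i}"
      by (auto simp: skip_def)
  next
    fix x assume "x \<in> {..<Suc r} - {i}" then show "x \<in> set (map (skip i) [0..<r])"
      proof -
      have "unskip i x \<in> set [0..<r]" "skip i (unskip i x) = x"
        using \<open>x \<in> {..<Suc r} - {i}\<close> assms by (auto simp: skip_def unskip_def)
      then show ?thesis by (metis image_eqI set_map)
    qed
  qed
  ultimately show ?thesis
    by (intro sorted_distinct_set_unique) auto
qed

lemma sl_all: "sorted_list_of_set {..<r} = [0..<r]"
  by (simp add: lessThan_atLeast0)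

lemma del_row:
  assumes "i < Suc r"
  shows "delete_rc (Suc r, c, A) {i} {} = (r, c, \<lambda>a b. a < r \<and> b < c \<and> A (skip i a) b)"
  using assms by (auto simp: delete_rc_def sl_del1 sl_all Let_def fun_eq_iff)

lemma del_col:
  assumes "j < Suc c"
  shows "delete_rc (r, Suc c, A) {} {j} = (r, c, \<lambda>a b. a < r \<and> b < c \<and> A a (skip j b))"
  using assms by (auto simp: delete_rc_def sl_del1 sl_all Let_def fun_eq_iff)

lemma card0: "C \<subseteq> {..<(n::nat)} \<Longrightarrow> card C = 0 \<longleftrightarrow> C = {}"
  using finite_subset by fastforce

lemma card1: "card C = Suc 0 \<longleftrightarrow> (\<exists>j. C = {j})"
  by (simp add: card_1_singleton_iff)

lemma Del10:
  "Del 1 0 (Suc r, c, A) = {delete_rc (Suc r, c, A) {i} {} | i. i < Suc r}"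
proof -
  have "\<exists>R C. delete_rc (Suc r, c, A) {i} {} = delete_rc (Suc r, c, A) R C \<and> R \<subseteq> {..<Suc r} \<and> card R = 1 \<and> C \<subseteq> {..<c} \<and> card C = 0"
    if "i < Suc r" for i
    by (rule exI[of _ "{i}"], rule exI[of _ "{}"]) (use that in auto)
  then show ?thesis unfolding Del_def by (auto simp: card0 card1)
qed

lemma Del01:
  "Del 0 1 (r, Suc c, A) = {delete_rc (r, Suc c, A) {} {j} | j. j < Suc c}"
proof -
  have "\<exists>R C. delete_rc (r, Suc c, A) {} {j} = delete_rc (r, Suc c, A) R C \<and> R \<subseteq> {..<r} \<and> card R = 0 \<and> C \<subseteq> {..<Suc c} \<and> card C = 1"
    if "j < Suc c" for j
    by (rule exI[of _ "{}"], rule exI[of _ "{j}"]) (use that in auto)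
  then show ?thesis unfolding Del_def by (auto simp: card0 card1)
qed

lemma Ins01:
  "Ins 0 1 (r, c, A) = {W \<in> binarrays r (Suc c). \<exists>j. j < Suc c \<and> delete_rc W {} {j} = (r, c, A)}"
proof -
  have "\<exists>R C. R \<subseteq> {..<r} \<and> card R = 0 \<and> C \<subseteq> {..<Suc c} \<and> card C = 1 \<and> delete_rc W R C = (r, c, A)"
    if "j < Suc c" "delete_rc W {} {j} = (r, c, A)" for j W
    by (rule exI[of _ "{}"], rule exI[of _ "{j}"]) (use that in auto)
  then show ?thesis unfolding Ins_def by (auto simp: card0 card1)
qed

lemma Ins10:
  "Ins 1 0 (r, c, A) = {W \<in> binarrays (Suc r) c. \<exists>i. i < Suc r \<and> delete_rc W {i} {} = (r, c, A)}"
proof -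
  have "\<exists>R C. R \<subseteq> {..<Suc r} \<and> card R = 1 \<and> C \<subseteq> {..<c} \<and> card C = 0 \<and> delete_rc W R C = (r, c, A)"
    if "i < Suc r" "delete_rc W {i} {} = (r, c, A)" for i W
    by (rule exI[of _ "{i}"], rule exI[of _ "{}"]) (use that in auto)
  then show ?thesis unfolding Ins_def by (auto simp: card0 card1)
qed

theorem lemma2:
  fixes m :: nat and X Y :: barray
  assumes "X \<in> binarrays (m + 1) m" and "Y \<in> binarrays m (m + 1)"
  shows "Del 1 0 X \<inter> Del 0 1 Y \<noteq> {} \<longleftrightarrow> Ins 0 1 X \<inter> Ins 1 0 Y \<noteq> {}"
proof -
  obtain A where X: "X = (Suc m, m, A)" and wA: "\<And>a b. \<not> (a < Suc m \<and> b < m) \<Longrightarrow> \<not> A a b"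
    using assms(1) unfolding binarrays_def wf_array_def
    by (cases X) (auto simp: not_less)
  obtain B where Y: "Y = (m, Suc m, B)" and wB: "\<And>a b. \<not> (a < m \<and> b < Suc m) \<Longrightarrow> \<not> B a b"
    using assms(2) unfolding binarrays_def wf_array_def
    by (cases Y) (auto simp: not_less)
  show ?thesis
  proof
    assume "Del 1 0 X \<inter> Del 0 1 Y \<noteq> {}"
    then obtain i j where i: "i < Suc m" and j: "j < Suc m"
      and eq0: "delete_rc X {i} {} = delete_rc Y {} {j}"
      unfolding X Y Del10 Del01 by blast
    have eq: "(a < m \<and> b < m \<and> A (skip i a) b) = (a < m \<and> b < m \<and> B a (skip j b))" for a b
      using eq0 i j unfolding X Y by (simp add: del_row del_col fun_eq_iff)
    define C where "C = (\<lambda>a b. a < Suc m \<and> b < Suc m \<and>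
       (if b = j then (if a = i then False else B (unskip i a) j) else A a (unskip j b)))"
    have W: "(Suc m, Suc m, C) \<in> binarrays (Suc m) (Suc m)"
      by (auto simp: binarrays_def wf_array_def C_def)
    have "delete_rc (Suc m, Suc m, C) {} {j} = X"
      using j wA unfolding X
      by (auto simp: del_col fun_eq_iff C_def skip_def unskip_def)
    moreover have "delete_rc (Suc m, Suc m, C) {i} {} = Y"
    proof -
      have "C (skip i a) b = B a b" if "a < m" "b < Suc m" for a b
      proof (cases "b = j")
        case True then show ?thesis using that i by (auto simp: C_def skip_def unskip_def)
      next
        case False
        have 1: "unskip j b < m" "skip j (unskip j b) = b"
          using False that j by (auto simp: skip_def unskip_def)
        have "A (skip i a) (unskip j b) = B a b"
          using eq[of a "unskip j b"] 1 that by auto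
        then show ?thesis using False that i by (auto simp: C_def skip_def unskip_def)
      qed
      then show ?thesis using i wB unfolding Y
        by (auto simp: del_row fun_eq_iff)
    qed
    ultimately have "(Suc m, Suc m, C) \<in> Ins 0 1 X \<inter> Ins 1 0 Y"
      using W i j unfolding X Y Ins01 Ins10 by auto
    then show "Ins 0 1 X \<inter> Ins 1 0 Y \<noteq> {}" by blast
  next
    assume "Ins 0 1 X \<inter> Ins 1 0 Y \<noteq> {}"
    then obtain W i j where W: "W \<in> binarrays (Suc m) (Suc m)" and i: "i < Suc m" and j: "j < Suc m"
      and d1: "delete_rc W {} {j} = X" and d2: "delete_rc W {i} {} = Y"
      unfolding X Y Ins01 Ins10 by auto
    obtain C where WC: "W = (Suc m, Suc m, C)"
      using W unfolding binarrays_def by (cases W) auto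
    have Aeq: "A = (\<lambda>a b. a < Suc m \<and> b < m \<and> C a (skip j b))"
      using d1 j unfolding WC X by (simp add: del_col)
    have Beq: "B = (\<lambda>a b. a < m \<and> b < Suc m \<and> C (skip i a) b)"
      using d2 i unfolding WC Y by (simp add: del_row)
    have "delete_rc X {i} {} = delete_rc Y {} {j}"
      using i j unfolding X Y
      by (auto simp: del_row del_col fun_eq_iff Aeq Beq skip_def)
    moreover have "delete_rc X {i} {} \<in> Del 1 0 X" using i unfolding X Del10 by auto
    moreover have "delete_rc Y {} {j} \<in> Del 0 1 Y" using j unfolding Y Del01 by auto
    ultimately show "Del 1 0 X \<inter> Del 0 1 Y \<noteq> {}" by auto
  qed
qed

end
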